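(* In any generalized-noncontextual ontological model of quantum theory, for each unit vector $\hat n_k\in\mathbb{R}^3$ and $\eta\in[0,1]$, the response function of the $\eta$-sharp spin measurement $\mathcal{M}_k$ given by the qubit POVM $\{E^k_{X_k}=\tfrac12\mathbf{1}+\tfrac{\eta}{2}X_k\vec\sigma\cdot\hat n_k\}_{X_k\in\{+1,-1\}}$ has the form $$p(X_k|\mathcal{M}_k;\lambda)=\eta\,[X_k(\lambda)]+(1-\eta)\big(\tfrac12[+1]+\tfrac12[-1]\big),$$ where $X_k(\lambda)\in\{+1,-1\}$ is the outcome assigned at $\lambda$ to the projective spin measurement along $\hat n_k$, and $[x]$ denotes the deterministic response function assigning probability 1 to outcome $x$.
   Context: An ontological model of quantum theory specifies ontic states $\lambda$, distributions $p(\lambda|P)$ for preparation procedures and response functions $p(X|M;\lambda)$ for measurement procedures reproducing the quantum statistics. It is measurement-noncontextual if operationally equivalent measurement procedures (same POVM) have identical response functions, preparation-noncontextual if operationally equivalent preparation procedures (same density operator) have identical distributions, and generalized-noncontextual if it is both. $\vec\sigma$ denotes the vector of Pauli matrices. *)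

theory Defs
  imports "HOL-Analysis.Analysis" "HOL-Probability.Probability"
begin

type_synonym qop = "complex^2^2"

definition pauli_x :: qop where
  "pauli_x = (\<chi> i j. if i \<noteq> j then 1 else 0)"

definition pauli_y :: qop where
  "pauli_y = (\<chi> i j. if i = 0 \<and> j = 1 then - \<i> else if i = 1 \<and> j = 0 then \<i> else 0)"

definition pauli_z :: qop where
  "pauli_z = (\<chi> i j. if i = j then (if i = 0 then 1 else -1) else 0)"

definition sigma_dot :: "real^3 \<Rightarrow> qop" where
  "sigma_dot n = (n$1) *\<^sub>R pauli_x + (n$2) *\<^sub>R pauli_y + (n$3) *\<^sub>R pauli_z"

definition hermitian_op :: "qop \<Rightarrow> bool" where
  "hermitian_op A \<longleftrightarrow> (\<forall>i j. A$i$j = cnj (A$j$i))"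

definition psd_op :: "qop \<Rightarrow> bool" where
  "psd_op A \<longleftrightarrow> hermitian_op A \<and>
     (\<forall>v::complex^2. 0 \<le> Re (\<Sum>i\<in>UNIV. cnj (v$i) * (A *v v)$i))"

definition density_op :: "qop \<Rightarrow> bool" where
  "density_op \<rho> \<longleftrightarrow> psd_op \<rho> \<and> trace \<rho> = 1"

definition is_povm :: "int set \<Rightarrow> (int \<Rightarrow> qop) \<Rightarrow> bool" where
  "is_povm T E \<longleftrightarrow> (\<forall>X\<in>T. psd_op (E X)) \<and> (\<forall>X. X \<notin> T \<longrightarrow> E X = 0)
      \<and> (\<Sum>X\<in>T. E X) = mat 1"

definition sharp_effect :: "real \<Rightarrow> real^3 \<Rightarrow> int \<Rightarrow> qop" where
  "sharp_effect \<eta> n X = (1/2) *\<^sub>R mat 1 + (\<eta> / 2 * real_of_int X) *\<^sub>R sigma_dot n"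

definition det_resp :: "int \<Rightarrow> int \<Rightarrow> real" where
  "det_resp x X = (if X = x then 1 else 0)"

text \<open>
  Preparation procedures (type 'p): density operator rho P, distribution mu P.
  Measurement procedures (type 'm): finite outcome set outs M (integer labels),
  POVM povm M, response functions xi M X lambda = p(X|M;lambda).\<close>
definition ontological_model ::
  "'l measure \<Rightarrow> ('p \<Rightarrow> qop) \<Rightarrow> ('p \<Rightarrow> 'l measure) \<Rightarrow> ('m \<Rightarrow> int set)
    \<Rightarrow> ('m \<Rightarrow> int \<Rightarrow> qop) \<Rightarrow> ('m \<Rightarrow> int \<Rightarrow> 'l \<Rightarrow> real) \<Rightarrow> bool" where
  "ontological_model L rho mu outs povm xi \<longleftrightarrow>
     (\<forall>P. density_op (rho P) \<and> prob_space (mu P) \<and> sets (mu P) = sets L) \<and>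
     (\<forall>M. finite (outs M) \<and> outs M \<noteq> {} \<and> is_povm (outs M) (povm M) \<and>
          (\<forall>X. xi M X \<in> borel_measurable L) \<and>
          (\<forall>X lam. 0 \<le> xi M X lam) \<and>
          (\<forall>X lam. X \<notin> outs M \<longrightarrow> xi M X lam = 0) \<and>
          (\<forall>lam. (\<Sum>X\<in>outs M. xi M X lam) = 1)) \<and>
     (\<forall>P M X. (\<integral>lam. xi M X lam \<partial>(mu P)) = Re (trace (rho P ** povm M X))) \<and>
     (\<forall>\<rho>. density_op \<rho> \<longrightarrow> (\<exists>P. rho P = \<rho>)) \<and>
     (\<forall>T E. finite T \<and> T \<noteq> {} \<and> is_povm T E \<longrightarrow> (\<exists>M. outs M = T \<and> povm M = E)) \<and>
     (\<forall>P1 P2 p. 0 \<le> p \<and> p \<le> 1 \<longrightarrow>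
        (\<exists>P. rho P = p *\<^sub>R rho P1 + (1 - p) *\<^sub>R rho P2 \<and>
             (\<forall>A\<in>sets L. measure (mu P) A = p * measure (mu P1) A + (1 - p) * measure (mu P2) A))) \<and>
     (\<forall>M1 M2 p. 0 \<le> p \<and> p \<le> 1 \<longrightarrow>
        (\<exists>M. outs M = outs M1 \<union> outs M2 \<and>
             (\<forall>X. povm M X = p *\<^sub>R povm M1 X + (1 - p) *\<^sub>R povm M2 X) \<and>
             (\<forall>X lam. xi M X lam = p * xi M1 X lam + (1 - p) * xi M2 X lam))) \<and>
     (\<forall>M T (q :: int \<Rightarrow> int \<Rightarrow> real). finite T \<and> T \<noteq> {} \<and> (\<forall>Y X. 0 \<le> q Y X) \<and>
          (\<forall>X\<in>outs M. (\<Sum>Y\<in>T. q Y X) = 1) \<longrightarrow>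
        (\<exists>M'. outs M' = T \<and>
             (\<forall>Y\<in>T. povm M' Y = (\<Sum>X\<in>outs M. q Y X *\<^sub>R povm M X) \<and>
                     (\<forall>lam. xi M' Y lam = (\<Sum>X\<in>outs M. q Y X * xi M X lam)))))"

text \<open>Operational equivalence: same density operator / same POVM.\<close>
definition preparation_noncontextual :: "('p \<Rightarrow> qop) \<Rightarrow> ('p \<Rightarrow> 'l measure) \<Rightarrow> bool" where
  "preparation_noncontextual rho mu \<longleftrightarrow> (\<forall>P1 P2. rho P1 = rho P2 \<longrightarrow> mu P1 = mu P2)"

definition measurement_noncontextual ::
  "('m \<Rightarrow> int set) \<Rightarrow> ('m \<Rightarrow> int \<Rightarrow> qop) \<Rightarrow> ('m \<Rightarrow> int \<Rightarrow> 'l \<Rightarrow> real) \<Rightarrow> bool" where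
  "measurement_noncontextual outs povm xi \<longleftrightarrow>
     (\<forall>M1 M2. outs M1 = outs M2 \<and> povm M1 = povm M2 \<longrightarrow> xi M1 = xi M2)"

definition generalized_noncontextual ::
  "('p \<Rightarrow> qop) \<Rightarrow> ('p \<Rightarrow> 'l measure) \<Rightarrow> ('m \<Rightarrow> int set) \<Rightarrow> ('m \<Rightarrow> int \<Rightarrow> qop)
    \<Rightarrow> ('m \<Rightarrow> int \<Rightarrow> 'l \<Rightarrow> real) \<Rightarrow> bool" where
  "generalized_noncontextual rho mu outs povm xi \<longleftrightarrow>
     preparation_noncontextual rho mu \<and> measurement_noncontextual outs povm xi"

end

theory Submission
  imports Defs
begin

lemma psd_proj: assumes "hermitian_op E" "E ** E = E" shows "psd_op E"
  unfolding psd_op_def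
proof (intro conjI allI)
  show "hermitian_op E" by fact
  fix v :: "complex^2"
  define w where "w = E *v v"
  have hE: "\<And>i j. E$i$j = cnj (E$j$i)" using assms(1) unfolding hermitian_op_def by blast
  have cw: "\<And>j. cnj (w$j) = (\<Sum>i\<in>UNIV. cnj (v$i) * E$i$j)"
  proof -
    fix j
    have "cnj (w$j) = (\<Sum>i\<in>UNIV. cnj (E$j$i) * cnj (v$i))"
      by (simp add: w_def matrix_vector_mult_def)
    also have "\<dots> = (\<Sum>i\<in>UNIV. cnj (v$i) * E$i$j)"
      by (rule sum.cong) (simp_all add: hE[of _ j])
    finally show "cnj (w$j) = (\<Sum>i\<in>UNIV. cnj (v$i) * E$i$j)" .
  qed
  have "(\<Sum>i\<in>UNIV. cnj (v$i) * (E *v v)$i) = (\<Sum>i\<in>UNIV. cnj (v$i) * (E *v w)$i)"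
    using assms(2) unfolding w_def by (simp add: matrix_vector_mul_assoc)
  also have "\<dots> = (\<Sum>i\<in>UNIV. \<Sum>j\<in>UNIV. cnj (v$i) * E$i$j * w$j)"
    by (simp add: matrix_vector_mult_def sum_distrib_left mult.assoc)
  also have "\<dots> = (\<Sum>j\<in>UNIV. \<Sum>i\<in>UNIV. cnj (v$i) * E$i$j * w$j)"
    by (rule sum.swap)
  also have "\<dots> = (\<Sum>j\<in>UNIV. cnj (w$j) * w$j)"
    by (simp add: cw sum_distrib_right)
  finally show "0 \<le> Re (\<Sum>i\<in>UNIV. cnj (v$i) * (E *v v)$i)"
    by (simp add: Re_sum sum_nonneg)
qed

lemma psd_compl: assumes "psd_op \<rho>" "trace \<rho> = 1" shows "psd_op (mat 1 - \<rho>)"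
  unfolding psd_op_def
proof (intro conjI allI)
  have hE: "\<And>i j. \<rho>$i$j = cnj (\<rho>$j$i)" using assms(1) unfolding psd_op_def hermitian_op_def by blast
  show "hermitian_op (mat 1 - \<rho>)" unfolding hermitian_op_def
  proof (intro allI)
    fix i j :: 2
    show "(mat 1 - \<rho>) $ i $ j = cnj ((mat 1 - \<rho>) $ j $ i)"
      using hE[of i j] by (simp add: mat_def)
  qed
  fix v :: "complex^2"
  define w :: "complex^2" where "w = (\<chi> i. if i = 1 then cnj (v$2) else - cnj (v$1))"
  have h: "\<rho>$1$1 = 1 - \<rho>$2$2" using assms(2) by (simp add: trace_def sum_2 algebra_simps)
  have "(\<Sum>i\<in>UNIV. cnj (v$i) * ((mat 1 - \<rho>) *v v)$i) = (\<Sum>i\<in>UNIV. cnj (w$i) * (\<rho> *v w)$i)"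
    unfolding w_def
    by (simp add: sum_2 matrix_vector_mult_def mat_def h algebra_simps)
  then show "0 \<le> Re (\<Sum>i\<in>UNIV. cnj (v$i) * ((mat 1 - \<rho>) *v v)$i)"
    using assms(1) unfolding psd_op_def by simp
qed

lemmas mdefs = sigma_dot_def pauli_x_def pauli_y_def pauli_z_def

lemma prod_form: "((a::real) *\<^sub>R mat 1 + b *\<^sub>R sigma_dot n) ** (c *\<^sub>R mat 1 + d *\<^sub>R sigma_dot n)
   = (a*c + b*d*((n$1)^2+(n$2)^2+(n$3)^2)) *\<^sub>R mat 1 + (a*d+b*c) *\<^sub>R (sigma_dot n :: qop)"
  unfolding mdefs
  apply (simp add: vec_eq_iff matrix_matrix_mult_def sum_2 forall_2 mat_def)
  apply (simp add: complex_eq_iff power2_eq_square algebra_simps)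
  done
lemma tr_form: "trace ((a::real) *\<^sub>R mat 1 + b *\<^sub>R (sigma_dot n :: qop)) = complex_of_real (2*a)"
  unfolding mdefs trace_def by (simp add: sum_2 mat_def complex_eq_iff)
lemma herm_form: "hermitian_op ((a::real) *\<^sub>R mat 1 + b *\<^sub>R (sigma_dot n :: qop))"
  unfolding mdefs hermitian_op_def by (simp add: forall_2 complex_eq_iff mat_def)

lemma norm_sq: "norm (n::real^3) = 1 \<Longrightarrow> (n$1)^2+(n$2)^2+(n$3)^2 = 1"
proof -
  assume "norm n = 1"
  then have "inner n n = 1" by (simp add: power2_norm_eq_inner[symmetric])
  then show ?thesis by (simp add: inner_vec_def sum_3 power2_eq_square)
qed

lemma int0_ae:
  fixes f :: "'a \<Rightarrow> real"
  assumes "prob_space M" "f \<in> borel_measurable M" "\<And>x. 0 \<le> f x" "\<And>x. f x \<le> 1" "integral\<^sup>L M f = 0"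
  shows "AE x in M. f x = 0"
proof -
  interpret prob_space M by fact
  have "integrable M f"
    by (rule integrable_const_bound[where B=1]) (use assms in auto)
  then show ?thesis using integral_nonneg_eq_0_iff_AE[of M f] assms by auto
qed

lemma int1_ae:
  fixes f :: "'a \<Rightarrow> real"
  assumes "prob_space M" "f \<in> borel_measurable M" "\<And>x. 0 \<le> f x" "\<And>x. f x \<le> 1" "integral\<^sup>L M f = 1"
  shows "AE x in M. f x = 1"
proof -
  interpret prob_space M by fact
  have i: "integrable M f"
    by (rule integrable_const_bound[where B=1]) (use assms in auto)
  have "integral\<^sup>L M (\<lambda>x. 1 - f x) = 0"
    using assms(5) i by (simp add: prob_space)
  then have "AE x in M. 1 - f x = 0"
    by (intro int0_ae) (use assms in auto)
  then show ?thesis by auto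
qed

lemma ae_meas0:
  assumes "prob_space M" "sets M = sets L" "B \<in> sets L" "AE x in M. x \<notin> B"
  shows "measure M B = 0"
  using assms AE_iff_null_sets[of B M] by (simp add: null_sets_def measure_def)

lemma meas0_ae:
  assumes "prob_space M" "sets M = sets L" "B \<in> sets L" "measure M B = 0"
  shows "AE x in M. x \<notin> B"
proof -
  interpret prob_space M by fact
  have "emeasure M B = 0" using assms(4) by (simp add: emeasure_eq_measure)
  then show ?thesis using assms AE_iff_null_sets[of B M] by (simp add: null_sets_def)
qed

lemma se_form: "sharp_effect \<eta> n X = (1/2) *\<^sub>R mat 1 + (\<eta> / 2 * real_of_int X) *\<^sub>R sigma_dot n"
  by (simp add: sharp_effect_def)

lemma se_proj: assumes "norm n = 1" "X \<in> {1, -1}"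
  shows "sharp_effect 1 n X ** sharp_effect 1 n X = sharp_effect 1 n X"
  using assms norm_sq[OF assms(1)] unfolding se_form prod_form by auto

lemma se_orth: assumes "norm n = 1"
  shows "sharp_effect 1 n (-1) ** sharp_effect 1 n 1 = 0"
  using norm_sq[OF assms(1)] unfolding se_form prod_form by simp

lemma se_tr: "trace (sharp_effect \<eta> n X) = 1"
  unfolding se_form tr_form by simp

lemma se_psd: assumes "norm n = 1" "X \<in> {1, -1}" shows "psd_op (sharp_effect 1 n X)"
  using se_proj[OF assms] by (intro psd_proj) (simp_all add: se_form herm_form)

lemma se_density: assumes "norm n = 1" "X \<in> {1, -1}" shows "density_op (sharp_effect 1 n X)"
  using se_psd[OF assms] se_tr density_op_def by blast

lemma se_sum: "sharp_effect 1 n 1 + sharp_effect 1 n (-1) = mat 1"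
  unfolding se_form mdefs by (simp add: vec_eq_iff forall_2 mat_def complex_eq_iff algebra_simps)

lemma se_mix: "\<eta> *\<^sub>R sharp_effect 1 n X + (1 - \<eta>) *\<^sub>R ((1/2) *\<^sub>R mat 1) = sharp_effect \<eta> n X"
  unfolding se_form mdefs by (simp add: vec_eq_iff forall_2 mat_def complex_eq_iff algebra_simps field_simps)
theorem lemma2:
  fixes L :: "'l measure" and rho :: "'p \<Rightarrow> qop" and mu :: "'p \<Rightarrow> 'l measure"
    and outs :: "'m \<Rightarrow> int set" and povm :: "'m \<Rightarrow> int \<Rightarrow> qop"
    and xi :: "'m \<Rightarrow> int \<Rightarrow> 'l \<Rightarrow> real" and n :: "real^3"
  assumes "ontological_model L rho mu outs povm xi"
    and "generalized_noncontextual rho mu outs povm xi"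
    and "norm n = 1"
  shows "\<exists>Xk :: 'l \<Rightarrow> int. Xk \<in> measurable L (count_space UNIV) \<and>
    (\<forall>P. AE lam in mu P. Xk lam \<in> {1, -1} \<and>
       (\<forall>M. outs M = {1, -1} \<and> (\<forall>X\<in>{1, -1}. povm M X = sharp_effect 1 n X) \<longrightarrow>
          (\<forall>X\<in>{1, -1}. xi M X lam = det_resp (Xk lam) X)) \<and>
       (\<forall>\<eta>\<in>{0..1}. \<forall>M. outs M = {1, -1} \<and> (\<forall>X\<in>{1, -1}. povm M X = sharp_effect \<eta> n X) \<longrightarrow>
          (\<forall>X\<in>{1, -1}. xi M X lam =
             \<eta> * det_resp (Xk lam) X + (1 - \<eta>) * (1/2 * det_resp 1 X + 1/2 * det_resp (-1) X))))"
proof -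
  note OM = assms(1)[unfolded ontological_model_def]
  note O1 = OM[THEN conjunct1] and O2 = OM[THEN conjunct2, THEN conjunct1]
    and O3 = OM[THEN conjunct2, THEN conjunct2, THEN conjunct1]
    and O4 = OM[THEN conjunct2, THEN conjunct2, THEN conjunct2, THEN conjunct1]
    and O5 = OM[THEN conjunct2, THEN conjunct2, THEN conjunct2, THEN conjunct2, THEN conjunct1]
    and O6 = OM[THEN conjunct2, THEN conjunct2, THEN conjunct2, THEN conjunct2, THEN conjunct2, THEN conjunct1]
    and O7 = OM[THEN conjunct2, THEN conjunct2, THEN conjunct2, THEN conjunct2, THEN conjunct2, THEN conjunct2, THEN conjunct1]
    and O8 = OM[THEN conjunct2, THEN conjunct2, THEN conjunct2, THEN conjunct2, THEN conjunct2, THEN conjunct2, THEN conjunct2]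
  have prep: "\<And>P. density_op (rho P) \<and> prob_space (mu P) \<and> sets (mu P) = sets L"
    using O1 by blast
  have meas: "\<And>M. finite (outs M) \<and> outs M \<noteq> {} \<and> is_povm (outs M) (povm M) \<and>
          (\<forall>X. xi M X \<in> borel_measurable L) \<and>
          (\<forall>X lam. 0 \<le> xi M X lam) \<and>
          (\<forall>X lam. X \<notin> outs M \<longrightarrow> xi M X lam = 0) \<and>
          (\<forall>lam. (\<Sum>X\<in>outs M. xi M X lam) = 1)"
    using O2 by blast
  have born: "\<And>P M X. (\<integral>lam. xi M X lam \<partial>(mu P)) = Re (trace (rho P ** povm M X))"
    using O3 by blast
  have exP: "\<And>\<rho>. density_op \<rho> \<Longrightarrow> \<exists>P. rho P = \<rho>" using O4 by blast
  have exM: "\<And>T E. finite T \<Longrightarrow> T \<noteq> {} \<Longrightarrow> is_povm T E \<Longrightarrow> \<exists>M. outs M = T \<and> povm M = E"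
    using O5 by blast
  have mixP: "\<And>Pa Pb p. 0 \<le> p \<Longrightarrow> p \<le> 1 \<Longrightarrow>
        (\<exists>P. rho P = p *\<^sub>R rho Pa + (1 - p) *\<^sub>R rho Pb \<and>
             (\<forall>A\<in>sets L. measure (mu P) A = p * measure (mu Pa) A + (1 - p) * measure (mu Pb) A))"
    using O6 by blast
  have mixM: "\<And>Ma Mb p. 0 \<le> p \<Longrightarrow> p \<le> 1 \<Longrightarrow>
        (\<exists>M. outs M = outs Ma \<union> outs Mb \<and>
             (\<forall>X. povm M X = p *\<^sub>R povm Ma X + (1 - p) *\<^sub>R povm Mb X) \<and>
             (\<forall>X lam. xi M X lam = p * xi Ma X lam + (1 - p) * xi Mb X lam))"
    using O7 by blast
  have post: "\<And>M T (q :: int \<Rightarrow> int \<Rightarrow> real). finite T \<Longrightarrow> T \<noteq> {} \<Longrightarrow> (\<forall>Y X. 0 \<le> q Y X) \<Longrightarrow>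
          (\<forall>X\<in>outs M. (\<Sum>Y\<in>T. q Y X) = 1) \<Longrightarrow>
        (\<exists>M'. outs M' = T \<and>
             (\<forall>Y\<in>T. povm M' Y = (\<Sum>X\<in>outs M. q Y X *\<^sub>R povm M X) \<and>
                     (\<forall>lam. xi M' Y lam = (\<Sum>X\<in>outs M. q Y X * xi M X lam))))"
    using O8 by blast
  have PNC: "\<And>P1 P2. rho P1 = rho P2 \<Longrightarrow> mu P1 = mu P2"
    using assms(2) unfolding generalized_noncontextual_def preparation_noncontextual_def by blast
  have MNC: "\<And>M1 M2. outs M1 = outs M2 \<Longrightarrow> povm M1 = povm M2 \<Longrightarrow> xi M1 = xi M2"
    using assms(2) unfolding generalized_noncontextual_def measurement_noncontextual_def by blast
  have zero_out: "\<And>M X. X \<notin> outs M \<Longrightarrow> povm M X = 0"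
    using meas unfolding is_povm_def by blast

  define F where "F = (\<lambda>X::int. if X \<in> {1, -1} then sharp_effect 1 n X else 0)"
  have povmF: "is_povm {1, -1} F"
    unfolding is_povm_def F_def using se_psd[OF assms(3)] se_sum[of n] by auto
  obtain M0 where M0: "outs M0 = {1, -1}" "povm M0 = F"
    using exM[OF _ _ povmF] by auto
  have xnn: "\<And>X l. 0 \<le> xi M0 X l" using meas by blast
  have xsum: "\<And>l. xi M0 1 l + xi M0 (-1) l = 1" using meas[of M0] M0 by simp
  have xle: "\<And>l. xi M0 1 l \<le> 1" using xnn xsum by (smt (verit))
  have xmeas: "xi M0 1 \<in> borel_measurable L" using meas by blast
  have xmP: "xi M0 1 \<in> borel_measurable (mu P)" for P
  proof -
    have "sets (mu P) = sets L" using prep by blast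
    then have "borel_measurable (mu P) = borel_measurable L" by (rule measurable_cong_sets) simp
    then show ?thesis using xmeas by metis
  qed
  have psP: "prob_space (mu P)" for P using prep by blast

  obtain Pp where Pp: "rho Pp = sharp_effect 1 n 1" using exP se_density[OF assms(3)] by blast
  obtain Pm where Pm: "rho Pm = sharp_effect 1 n (-1)" using exP se_density[OF assms(3)] by blast

  define B where "B = {l \<in> space L. xi M0 1 l \<noteq> 0 \<and> xi M0 1 l \<noteq> 1}"
  have Bs: "B \<in> sets L" unfolding B_def using xmeas by measurable

  have e1: "povm M0 1 = sharp_effect 1 n 1" using M0(2) unfolding F_def by simp
  have "(\<integral>l. xi M0 1 l \<partial>(mu Pp)) = Re (trace (sharp_effect 1 n 1 ** sharp_effect 1 n 1))"
    using born[where P=Pp and M=M0 and X=1] unfolding Pp e1 .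
  also have "\<dots> = 1" unfolding se_proj[OF assms(3), of 1, simplified] se_tr by simp
  finally have "(\<integral>l. xi M0 1 l \<partial>(mu Pp)) = 1" .
  then have "AE l in mu Pp. xi M0 1 l = 1"
    by (rule int1_ae[OF psP xmP xnn xle])
  then have "AE l in mu Pp. l \<notin> B" by (auto simp: B_def)
  then have mBp: "measure (mu Pp) B = 0" using ae_meas0 prep Bs by blast

  have "(\<integral>l. xi M0 1 l \<partial>(mu Pm)) = Re (trace (sharp_effect 1 n (-1) ** sharp_effect 1 n 1))"
    using born[where P=Pm and M=M0 and X=1] unfolding Pm e1 .
  also have "\<dots> = 0" unfolding se_orth[OF assms(3)] by (simp add: trace_def)
  finally have "(\<integral>l. xi M0 1 l \<partial>(mu Pm)) = 0" .
  then have "AE l in mu Pm. xi M0 1 l = 0"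
    by (rule int0_ae[OF psP xmP xnn xle])
  then have "AE l in mu Pm. l \<notin> B" by (auto simp: B_def)
  then have mBm: "measure (mu Pm) B = 0" using ae_meas0 prep Bs by blast

  obtain Q0 where Q0: "rho Q0 = (1/2) *\<^sub>R rho Pp + (1 - 1/2) *\<^sub>R rho Pm"
     "\<forall>A\<in>sets L. measure (mu Q0) A = 1/2 * measure (mu Pp) A + (1 - 1/2) * measure (mu Pm) A"
    using mixP[where Pa=Pp and Pb=Pm and p="1/2"] by auto
  have rQ0: "rho Q0 = (1/2) *\<^sub>R mat 1"
    using Q0(1) Pp Pm se_sum[of n] by (simp add: scaleR_add_right[symmetric])
  have mQ0: "measure (mu Q0) B = 0" using Q0(2) Bs mBp mBm by simp

  have aeB: "AE l in mu P. l \<notin> B" for P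
  proof -
    have d: "density_op (mat 1 - rho P)"
      using prep[of P] psd_compl unfolding density_op_def
      by (simp add: trace_sub trace_I)
    obtain P' where P': "rho P' = mat 1 - rho P" using exP[OF d] by blast
    obtain Pq where Pq: "rho Pq = (1/2) *\<^sub>R rho P + (1 - 1/2) *\<^sub>R rho P'"
     "\<forall>A\<in>sets L. measure (mu Pq) A = 1/2 * measure (mu P) A + (1 - 1/2) * measure (mu P') A"
      using mixP[where Pa=P and Pb=P' and p="1/2"] by auto
    have "rho Pq = rho Q0" using Pq(1) P' rQ0 by (simp add: scaleR_add_right[symmetric])
    then have "mu Pq = mu Q0" by (rule PNC)
    then have "1/2 * measure (mu P) B + 1/2 * measure (mu P') B = 0"
      using Pq(2) Bs mQ0 by simp
    then have "measure (mu P) B = 0"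
      using measure_nonneg[of "mu P" B] measure_nonneg[of "mu P'" B] by linarith
    then show ?thesis using meas0_ae prep Bs by blast
  qed

  obtain Mt where Mt: "outs Mt = {1, -1}"
    "\<forall>Y\<in>{1,-1}. povm Mt Y = (\<Sum>X\<in>outs M0. (1/2::real) *\<^sub>R povm M0 X) \<and>
                 (\<forall>lam. xi Mt Y lam = (\<Sum>X\<in>outs M0. 1/2 * xi M0 X lam))"
    using post[where M=M0 and T="{1,-1}" and q="\<lambda>Y X. 1/2"] by auto
  have Mt_povm: "\<And>Y. Y \<in> {1,-1} \<Longrightarrow> povm Mt Y = (1/2) *\<^sub>R mat 1"
    using Mt(2) M0 se_sum[of n] by (auto simp add: F_def scaleR_add_right[symmetric])
  have Mt_xi: "\<And>Y l. Y \<in> {1,-1} \<Longrightarrow> xi Mt Y l = 1/2"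
  proof -
    fix Y l assume "Y \<in> {1::int,-1}"
    then have "xi Mt Y l = 1/2 * xi M0 1 l + 1/2 * xi M0 (-1) l" using Mt(2) M0 by auto
    then show "xi Mt Y l = 1/2" using xsum[of l] by simp
  qed

  define Xk where "Xk = (\<lambda>l. if xi M0 1 l = 1 then (1::int) else -1)"
  have Xkm: "Xk \<in> measurable L (count_space UNIV)"
    unfolding Xk_def using xmeas by measurable

  have good: "Xk l \<in> {1, -1} \<and>
       (\<forall>M. outs M = {1, -1} \<and> (\<forall>X\<in>{1, -1}. povm M X = sharp_effect 1 n X) \<longrightarrow>
          (\<forall>X\<in>{1, -1}. xi M X l = det_resp (Xk l) X)) \<and>
       (\<forall>\<eta>\<in>{0..1}. \<forall>M. outs M = {1, -1} \<and> (\<forall>X\<in>{1, -1}. povm M X = sharp_effect \<eta> n X) \<longrightarrow>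
          (\<forall>X\<in>{1, -1}. xi M X l =
             \<eta> * det_resp (Xk l) X + (1 - \<eta>) * (1/2 * det_resp 1 X + 1/2 * det_resp (-1) X)))"
    if l: "l \<in> space L" "l \<notin> B" for l
  proof -
    have v: "xi M0 1 l = 0 \<or> xi M0 1 l = 1" using l by (auto simp: B_def)
    have d0: "\<And>X. X \<in> {1,-1} \<Longrightarrow> xi M0 X l = det_resp (Xk l) X"
      using v xsum[of l] by (auto simp: det_resp_def Xk_def)
    have sharp: "xi M X l = det_resp (Xk l) X"
      if "outs M = {1, -1}" "\<forall>X\<in>{1, -1}. povm M X = sharp_effect 1 n X" "X \<in> {1,-1}" for M X
    proof -
      have "povm M = povm M0"
      proof
        fix Y show "povm M Y = povm M0 Y"
          using that zero_out[where M=M and X=Y] by (cases "Y \<in> {1,-1}") (auto simp: M0 F_def)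
      qed
      then have "xi M = xi M0" using MNC that(1) M0(1) by simp
      then show ?thesis using d0 that(3) by simp
    qed
    have unsharp: "xi M X l =
             \<eta> * det_resp (Xk l) X + (1 - \<eta>) * (1/2 * det_resp 1 X + 1/2 * det_resp (-1) X)"
      if "\<eta> \<in> {0..1}" "outs M = {1, -1}" "\<forall>X\<in>{1, -1}. povm M X = sharp_effect \<eta> n X" "X \<in> {1,-1}"
      for \<eta> M X
    proof -
      have e01: "0 \<le> \<eta>" "\<eta> \<le> 1" using that(1) by auto
      obtain Me where Me: "outs Me = outs M0 \<union> outs Mt"
        "\<forall>X. povm Me X = \<eta> *\<^sub>R povm M0 X + (1 - \<eta>) *\<^sub>R povm Mt X"
        "\<forall>X lam. xi Me X lam = \<eta> * xi M0 X lam + (1 - \<eta>) * xi Mt X lam"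
        using mixM[where Ma=M0 and Mb=Mt and p=\<eta>, OF e01] by blast
      have oMe: "outs Me = {1,-1}" using Me(1) M0 Mt(1) by simp
      have "povm M = povm Me"
      proof
        fix Y show "povm M Y = povm Me Y"
        proof (cases "Y \<in> {1,-1}")
          case True
          have l1: "povm M Y = sharp_effect \<eta> n Y" using that(3) True by blast
          have "povm Me Y = \<eta> *\<^sub>R sharp_effect 1 n Y + (1 - \<eta>) *\<^sub>R ((1/2) *\<^sub>R mat 1)"
            using Me(2) Mt_povm[OF True] True by (simp add: M0 F_def)
          then show ?thesis using l1 se_mix[of \<eta> n Y] by simp
        next
          case False
          then show ?thesis using zero_out[where M=M and X=Y] zero_out[where M=Me and X=Y] that(2) oMe by simp
        qed
      qed
      then have "xi M = xi Me" using MNC that(2) oMe by simp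
      then have "xi M X l = \<eta> * det_resp (Xk l) X + (1 - \<eta>) * (1/2)"
        using Me(3) d0[OF that(4)] Mt_xi[OF that(4)] by simp
      then show ?thesis using that(4) by (auto simp: det_resp_def)
    qed
    show ?thesis using sharp unsharp by (auto simp: Xk_def)
  qed

  show ?thesis
  proof (intro exI conjI allI)
    show "Xk \<in> measurable L (count_space UNIV)" by (rule Xkm)
    fix P
    have sp: "space (mu P) = space L" using prep[of P] sets_eq_imp_space_eq by blast
    show "AE lam in mu P. Xk lam \<in> {1, -1} \<and>
       (\<forall>M. outs M = {1, -1} \<and> (\<forall>X\<in>{1, -1}. povm M X = sharp_effect 1 n X) \<longrightarrow>
          (\<forall>X\<in>{1, -1}. xi M X lam = det_resp (Xk lam) X)) \<and>
       (\<forall>\<eta>\<in>{0..1}. \<forall>M. outs M = {1, -1} \<and> (\<forall>X\<in>{1, -1}. povm M X = sharp_effect \<eta> n X) \<longrightarrow>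
          (\<forall>X\<in>{1, -1}. xi M X lam =
             \<eta> * det_resp (Xk lam) X + (1 - \<eta>) * (1/2 * det_resp 1 X + 1/2 * det_resp (-1) X)))"
      using aeB[of P] AE_space[of "mu P"]
    proof (eventually_elim)
      case (elim l) then show ?case using good sp by blast
    qed
  qed
qed

end
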